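(* Let $G=(V,E)$ be a finite simple graph with at least one vertex, $k>0$, and let $\mathcal F^*$ be the set of all stars $\{(A_1,B_1),(A_2,B_2),(A_3,B_3)\}\subseteq\vec S_k$ (elements not necessarily distinct) with $G[A_1]\cup G[A_2]\cup G[A_3]=G$. Then $\mathcal F^*$ is closed under shifting (with respect to $\vec S_k$ inside the universe $\vec U$ of oriented vertex separations of $G$): whenever $\vec s_0\in\vec S_k$ is linked to some $\vec r\le\vec s_0$ in $\vec S_k$ that is not forced by $\mathcal F^*$, then $\vec s_0$ is $\mathcal F^*$-linked to $\vec r$.
   Context: An oriented vertex separation of $G$ is an ordered pair $(A,B)$ with $A\cup B=V$ and no edge between $A\setminus B$ and $B\setminus A$. They form a universe $\vec U$ with $(A,B)\le(C,D)$ iff $A\subseteq C$, $B\supseteq D$; $(A,B)^*=(B,A)$; $(A,B)\vee(C,D)=(A\cup C,B\cap D)$; $(A,B)\wedge(C,D)=(A\cap C,B\cup D)$. $\vec S_k=\{(A,B)\in\vec U:|A\cap B|<k\}$, and $S_k$ is its set of separations $s=\{\vec s,\vec s^{\,*}\}$; write $\overleftarrow s=\vec s^{\,*}$; $s$ is degenerate if $\vec s=\overleftarrow s$; $\vec r$ is trivial if some $s\in S_k$ has $\vec r<\vec s$ and $\vec r<\overleftarrow s$. A star is a nonempty set $\sigma$ with $\vec r\le\overleftarrow s$ for all distinct $\vec r,\vec s\in\sigma$. $\mathcal F$ forces $\vec r$ if $\{\overleftarrow r\}\in\mathcal F$ or $r$ is degenerate (elements not forced by $\mathcal F^*$ are nontrivial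 and nondegenerate). For nontrivial nondegenerate $\vec r$, $\vec S_{\ge\vec r}$ is the set of all orientations of separations in $S_k$ having an orientation $\ge\vec r$, and for $\vec s_0\ge\vec r$ the shifting map $f:\vec S_{\ge\vec r}\to\vec U$ is $f(\vec s)=\vec s\vee\vec s_0$, $f(\overleftarrow s)=(\vec s\vee\vec s_0)^*$ for all $\vec s\in\vec S_{\ge\vec r}\setminus\{\overleftarrow r\}$ with $\vec s\ge\vec r$. $\vec s_0$ is linked to $\vec r$ if $\vec s_0\ge\vec r$ and $\vec s\vee\vec s_0\in\vec S_k$ for all $\vec s\in\vec S_k$ with $\vec s\ge\vec r$, $\vec s\ne\overleftarrow r$; it is $\mathcal F$-linked to $\vec r$ if moreover $f(\sigma)\in\mathcal F$ for every star $\sigma\in\mathcal F$ with $\sigma\subseteq\vec S_{\ge\vec r}\setminus\{\overleftarrow r\}$ having an element $\ge\vec r$. *)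

theory Defs
  imports Main
begin

text \<open>Finite simple graph G = (V,E): E is a symmetric irreflexive relation on V.
 Oriented vertex separations are pairs (A,B) of vertex sets.\<close>

type_synonym 'a osep = "'a set \<times> 'a set"

definition is_osep :: "'a set \<Rightarrow> ('a \<times> 'a) set \<Rightarrow> 'a osep \<Rightarrow> bool" where
  "is_osep V E p \<longleftrightarrow> fst p \<union> snd p = V \<and>
     (\<forall>x \<in> fst p - snd p. \<forall>y \<in> snd p - fst p. (x, y) \<notin> E)"

definition Univ :: "'a set \<Rightarrow> ('a \<times> 'a) set \<Rightarrow> 'a osep set" where
  "Univ V E = {p. is_osep V E p}"

definition sep_le :: "'a osep \<Rightarrow> 'a osep \<Rightarrow> bool" where
  "sep_le p q \<longleftrightarrow> fst p \<subseteq> fst q \<and> snd q \<subseteq> snd p"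

definition sinv :: "'a osep \<Rightarrow> 'a osep" where
  "sinv p = (snd p, fst p)"

definition sjoin :: "'a osep \<Rightarrow> 'a osep \<Rightarrow> 'a osep" where
  "sjoin p q = (fst p \<union> fst q, snd p \<inter> snd q)"

definition smeet :: "'a osep \<Rightarrow> 'a osep \<Rightarrow> 'a osep" where
  "smeet p q = (fst p \<inter> fst q, snd p \<union> snd q)"

definition Sk :: "'a set \<Rightarrow> ('a \<times> 'a) set \<Rightarrow> nat \<Rightarrow> 'a osep set" where
  "Sk V E k = {p \<in> Univ V E. card (fst p \<inter> snd p) < k}"

definition degenerate :: "'a osep \<Rightarrow> bool" where
  "degenerate s \<longleftrightarrow> s = sinv s"

definition is_star :: "'a osep set \<Rightarrow> bool" where
  "is_star \<sigma> \<longleftrightarrow> \<sigma> \<noteq> {} \<and> (\<forall>r \<in> \<sigma>. \<forall>s \<in> \<sigma>. r \<noteq> s \<longrightarrow> sep_le r (sinv s))"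

definition induced_union_is_G ::
  "'a set \<Rightarrow> ('a \<times> 'a) set \<Rightarrow> 'a set \<Rightarrow> 'a set \<Rightarrow> 'a set \<Rightarrow> bool" where
  "induced_union_is_G V E A1 A2 A3 \<longleftrightarrow>
     (A1 \<inter> V) \<union> (A2 \<inter> V) \<union> (A3 \<inter> V) = V \<and>
     (E \<inter> (A1 \<times> A1)) \<union> (E \<inter> (A2 \<times> A2)) \<union> (E \<inter> (A3 \<times> A3)) = E"

definition Fstar :: "'a set \<Rightarrow> ('a \<times> 'a) set \<Rightarrow> nat \<Rightarrow> 'a osep set set" where
  "Fstar V E k = {\<sigma>. \<exists>a1 a2 a3. a1 \<in> Sk V E k \<and> a2 \<in> Sk V E k \<and> a3 \<in> Sk V E k \<and>
      \<sigma> = {a1, a2, a3} \<and> is_star \<sigma> \<and> induced_union_is_G V E (fst a1) (fst a2) (fst a3)}"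

definition forces :: "'a osep set set \<Rightarrow> 'a osep \<Rightarrow> bool" where
  "forces F r \<longleftrightarrow> {sinv r} \<in> F \<or> degenerate r"

definition S_ge :: "'a set \<Rightarrow> ('a \<times> 'a) set \<Rightarrow> nat \<Rightarrow> 'a osep \<Rightarrow> 'a osep set" where
  "S_ge V E k r = {s \<in> Sk V E k. sep_le r s \<or> sep_le r (sinv s)}"

text \<open>Shifting map f: f(s) = s \<or> s0 and f(s*) = (s \<or> s0)* for s \<ge> r, s \<noteq> r*.
  Written out pointwise (well-defined on S_{\<ge> r} for nondegenerate nontrivial r).\<close>
definition shift :: "'a osep \<Rightarrow> 'a osep \<Rightarrow> 'a osep \<Rightarrow> 'a osep" where
  "shift r s0 t = (if sep_le r t \<and> t \<noteq> sinv r then sjoin t s0 else sinv (sjoin (sinv t) s0))"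

definition linked :: "'a set \<Rightarrow> ('a \<times> 'a) set \<Rightarrow> nat \<Rightarrow> 'a osep \<Rightarrow> 'a osep \<Rightarrow> bool" where
  "linked V E k s0 r \<longleftrightarrow> sep_le r s0 \<and>
     (\<forall>s \<in> Sk V E k. sep_le r s \<and> s \<noteq> sinv r \<longrightarrow> sjoin s s0 \<in> Sk V E k)"

definition F_linked ::
  "'a osep set set \<Rightarrow> 'a set \<Rightarrow> ('a \<times> 'a) set \<Rightarrow> nat \<Rightarrow> 'a osep \<Rightarrow> 'a osep \<Rightarrow> bool" where
  "F_linked F V E k s0 r \<longleftrightarrow> linked V E k s0 r \<and>
     (\<forall>\<sigma> \<in> F. is_star \<sigma> \<and> \<sigma> \<subseteq> S_ge V E k r - {sinv r} \<and> (\<exists>s \<in> \<sigma>. sep_le r s)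
        \<longrightarrow> shift r s0 ` \<sigma> \<in> F)"

end

theory Submission
  imports Defs
begin

lemma sinv_Sk: "sym E \<Longrightarrow> p \<in> Sk V E k \<Longrightarrow> sinv p \<in> Sk V E k"
  by (auto simp: Sk_def Univ_def is_osep_def sinv_def Int_commute dest: symD)

lemma sinv_sinv[simp]: "sinv (sinv p) = p"
  by (simp add: sinv_def)

lemma sep_le_flip: "sep_le p q \<Longrightarrow> sep_le (sinv q) (sinv p)"
  by (auto simp: sep_le_def sinv_def)

lemma sep_le_trans: "sep_le p q \<Longrightarrow> sep_le q u \<Longrightarrow> sep_le p u"
  by (auto simp: sep_le_def)

lemma cover_lemma:
  assumes "induced_union_is_G V E A1 A2 A3"
    and "A1 \<inter> S2 \<subseteq> B1" "A2 \<inter> S2 \<subseteq> B2" "A3 \<inter> S2 \<subseteq> B3"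
    and "S1 \<subseteq> B1 \<or> S1 \<subseteq> B2 \<or> S1 \<subseteq> B3"
    and "S1 \<union> S2 = V" "\<forall>x \<in> S1 - S2. \<forall>y \<in> S2 - S1. (x, y) \<notin> E"
    and "sym E" "E \<subseteq> V \<times> V"
  shows "induced_union_is_G V E B1 B2 B3"
  unfolding induced_union_is_G_def
proof
  have V: "V = A1 \<inter> V \<union> A2 \<inter> V \<union> A3 \<inter> V" and EE: "E = E \<inter> (A1 \<times> A1) \<union> E \<inter> (A2 \<times> A2) \<union> E \<inter> (A3 \<times> A3)"
    using assms(1) by (auto simp: induced_union_is_G_def)
  show "B1 \<inter> V \<union> B2 \<inter> V \<union> B3 \<inter> V = V"
  proof
    show "V \<subseteq> B1 \<inter> V \<union> B2 \<inter> V \<union> B3 \<inter> V"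
    proof
      fix x assume x: "x \<in> V"
      show "x \<in> B1 \<inter> V \<union> B2 \<inter> V \<union> B3 \<inter> V"
      proof (cases "x \<in> S1")
        case True then show ?thesis using x assms(5) by blast
      next
        case False
        then have "x \<in> S2" using x assms(6) by blast
        then show ?thesis using x V assms(2-4) by blast
      qed
    qed
  qed blast
  show "E \<inter> (B1 \<times> B1) \<union> E \<inter> (B2 \<times> B2) \<union> E \<inter> (B3 \<times> B3) = E"
  proof
    show "E \<subseteq> E \<inter> (B1 \<times> B1) \<union> E \<inter> (B2 \<times> B2) \<union> E \<inter> (B3 \<times> B3)"
    proof
      fix e assume e: "e \<in> E"
      obtain x y where xy: "e = (x, y)" by (cases e)
      have xV: "x \<in> V" "y \<in> V" using e xy assms(9) by auto
      have yx: "(y, x) \<in> E" using e xy assms(8) by (auto dest: symD)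
      show "e \<in> E \<inter> (B1 \<times> B1) \<union> E \<inter> (B2 \<times> B2) \<union> E \<inter> (B3 \<times> B3)"
      proof (cases "x \<in> S2 \<and> y \<in> S2")
        case True
        then show ?thesis using e EE assms(2-4) xy by blast
      next
        case False
        have "x \<in> S1 \<and> y \<in> S1"
        proof (rule ccontr)
          assume "\<not> (x \<in> S1 \<and> y \<in> S1)"
          then show False using False xV assms(6,7) e xy yx by blast
        qed
        then show ?thesis using e xy assms(5) by blast
      qed
    qed
  qed blast
qed

theorem lemma5p3:
  fixes V :: "'a set" and E :: "('a \<times> 'a) set" and k :: nat
  assumes "finite V" and "V \<noteq> {}"
    and "E \<subseteq> V \<times> V" and "sym E" and "\<forall>x. (x, x) \<notin> E"
    and "k > 0"
  shows "\<forall>s0 \<in> Sk V E k. \<forall>r \<in> Sk V E k.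
           sep_le r s0 \<and> linked V E k s0 r \<and> \<not> forces (Fstar V E k) r
           \<longrightarrow> F_linked (Fstar V E k) V E k s0 r"
proof (intro ballI impI)
  fix s0 r assume s0: "s0 \<in> Sk V E k" and r: "r \<in> Sk V E k"
    and H: "sep_le r s0 \<and> linked V E k s0 r \<and> \<not> forces (Fstar V E k) r"
  have lk: "linked V E k s0 r" using H by blast
  have notsmall: "\<not> sep_le r (sinv r)"
  proof
    assume a: "sep_le r (sinv r)"
    have "snd r = V" using a r by (auto simp: sep_le_def sinv_def Sk_def Univ_def is_osep_def)
    moreover have "sinv r \<in> Sk V E k" using r sinv_Sk assms(4) by blast
    ultimately have "{sinv r} \<in> Fstar V E k"
      unfolding Fstar_def using assms(3)
      by (auto simp: is_star_def induced_union_is_G_def sinv_def)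
    then show False using H by (simp add: forces_def)
  qed
  show "F_linked (Fstar V E k) V E k s0 r"
    unfolding F_linked_def
  proof (intro conjI ballI impI)
    show "linked V E k s0 r" by (rule lk)
    fix \<sigma> assume \<sigma>F: "\<sigma> \<in> Fstar V E k"
      and P: "is_star \<sigma> \<and> \<sigma> \<subseteq> S_ge V E k r - {sinv r} \<and> (\<exists>s\<in>\<sigma>. sep_le r s)"
    obtain a1 a2 a3 where a: "a1 \<in> Sk V E k" "a2 \<in> Sk V E k" "a3 \<in> Sk V E k"
      "\<sigma> = {a1, a2, a3}" "induced_union_is_G V E (fst a1) (fst a2) (fst a3)"
      using \<sigma>F unfolding Fstar_def by blast
    obtain s where s: "s \<in> \<sigma>" "sep_le r s" using P by blast
    have sSk: "s \<in> Sk V E k" and snr: "s \<noteq> sinv r" using s P a by (auto simp: S_ge_def)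
    have tle: "\<And>t. t \<in> \<sigma> \<Longrightarrow> t \<noteq> s \<Longrightarrow> sep_le t (sinv s)"
      using P s unfolding is_star_def by blast
    have nrt: "\<And>t. t \<in> \<sigma> \<Longrightarrow> t \<noteq> s \<Longrightarrow> \<not> sep_le r t"
    proof
      fix t assume t: "t \<in> \<sigma>" "t \<noteq> s" "sep_le r t"
      have "sep_le r (sinv s)" using sep_le_trans[OF t(3) tle[OF t(1,2)]] .
      then have "sep_le r (sinv r)" using sep_le_trans sep_le_flip[OF s(2)] by blast
      then show False using notsmall by blast
    qed
    define f where "f x = (if x = s then sjoin s s0 else sinv (sjoin (sinv x) s0))" for x
    have shf: "\<And>x. x \<in> \<sigma> \<Longrightarrow> shift r s0 x = f x"
      using nrt s snr by (auto simp: f_def shift_def)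
    have img: "shift r s0 ` \<sigma> = f ` \<sigma>" using shf by auto
    have fSk: "\<And>x. x \<in> \<sigma> \<Longrightarrow> f x \<in> Sk V E k"
    proof -
      fix x assume x: "x \<in> \<sigma>"
      show "f x \<in> Sk V E k"
      proof (cases "x = s")
        case True
        then show ?thesis using lk sSk s snr by (auto simp: f_def linked_def)
      next
        case False
        have xSk: "x \<in> Sk V E k" using x a by auto
        have "sep_le r (sinv x)"
          using sep_le_trans[OF s(2)] sep_le_flip[OF tle[OF x False]] by simp
        moreover have "sinv x \<noteq> sinv r"
        proof
          assume "sinv x = sinv r"
          then have "x = r" by (metis sinv_sinv)
          then show False using nrt[OF x False] by (simp add: sep_le_def)
        qed
        ultimately have "sjoin (sinv x) s0 \<in> Sk V E k"
          using lk sinv_Sk[OF assms(4) xSk] by (auto simp: linked_def)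
        then show ?thesis using False by (simp add: f_def sinv_Sk assms(4))
      qed
    qed
    have star: "is_star (f ` \<sigma>)"
      unfolding is_star_def
    proof (intro conjI ballI impI)
      show "f ` \<sigma> \<noteq> {}" using s by auto
      fix p q assume p: "p \<in> f ` \<sigma>" and q: "q \<in> f ` \<sigma>" and pq: "p \<noteq> q"
      obtain x y where xy: "x \<in> \<sigma>" "y \<in> \<sigma>" "p = f x" "q = f y" using p q by blast
      have xny: "x \<noteq> y" using pq xy by auto
      have xy': "sep_le x (sinv y)" using P xy xny unfolding is_star_def by blast
      show "sep_le p (sinv q)"
        using xy xny xy' unfolding f_def
        by (auto simp: sep_le_def sinv_def sjoin_def)
    qed
    have s0sep: "fst s0 \<union> snd s0 = V" "\<forall>x \<in> fst s0 - snd s0. \<forall>y \<in> snd s0 - fst s0. (x, y) \<notin> E"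
      using s0 by (auto simp: Sk_def Univ_def is_osep_def)
    have sub: "\<And>x. x \<in> \<sigma> \<Longrightarrow> fst x \<inter> snd s0 \<subseteq> fst (f x)"
      by (auto simp: f_def sinv_def sjoin_def)
    have fs: "fst s0 \<subseteq> fst (f s)" by (auto simp: f_def sjoin_def)
    have cov: "induced_union_is_G V E (fst (f a1)) (fst (f a2)) (fst (f a3))"
    proof (rule cover_lemma[OF a(5) _ _ _ _ s0sep(1) s0sep(2) assms(4) assms(3)])
      show "fst a1 \<inter> snd s0 \<subseteq> fst (f a1)" using sub a(4) by auto
      show "fst a2 \<inter> snd s0 \<subseteq> fst (f a2)" using sub a(4) by auto
      show "fst a3 \<inter> snd s0 \<subseteq> fst (f a3)" using sub a(4) by auto
      show "fst s0 \<subseteq> fst (f a1) \<or> fst s0 \<subseteq> fst (f a2) \<or> fst s0 \<subseteq> fst (f a3)"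
        using fs s(1) a(4) by auto
    qed
    have "f ` \<sigma> = {f a1, f a2, f a3}" using a(4) by auto
    then have "f ` \<sigma> \<in> Fstar V E k"
      unfolding Fstar_def
    proof (intro CollectI exI conjI)
      show "f a1 \<in> Sk V E k" "f a2 \<in> Sk V E k" "f a3 \<in> Sk V E k" using fSk a(4) by auto
    qed (use \<open>f ` \<sigma> = {f a1, f a2, f a3}\<close> star cov in auto)
    then show "shift r s0 ` \<sigma> \<in> Fstar V E k" using img by simp
  qed
qed

end
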